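(* Let $\Gamma=(V,E)$ be a simple graph of order $n$ and size $m$, and let $\lambda$ be the spectral radius of $\Gamma$. Then the global dual alliance number of $\Gamma$ satisfies $$\gamma_{a_d}(\Gamma)\ge \left\lceil\frac{2m+n}{4(\lambda+1)}\right\rceil$$ and the global strong dual alliance number of $\Gamma$ satisfies $$\gamma_{\hat{a}_d}(\Gamma)\ge \left\lceil\frac{m+n}{2\lambda+1}\right\rceil.$$
   Context: For $S\subseteq V$ and $v\in V$, $N_S(v)=\{u\in S: u\sim v\}$ and $N_{V\setminus S}(v)=\{u\in V\setminus S: u\sim v\}$. A nonempty set $S\subseteq V$ is a global dual alliance if (i) $|N_S(v)|+1\ge |N_{V\setminus S}(v)|$ for every $v\in S$ and (ii) $|N_S(v)|\ge |N_{V\setminus S}(v)|+1$ for every $v\in V\setminus S$. It is a global strong dual alliance if (i') $|N_S(v)|\ge |N_{V\setminus S}(v)|$ for every $v\in S$ and (ii') $|N_S(v)|\ge |N_{V\setminus S}(v)|+2$ for every $v\in V\setminus S$. $\gamma_{a_d}(\Gamma)$ (resp. $\gamma_{\hat a_d}(\Gamma)$) is the minimum cardinality of a global dual (resp. global strong dual) alliance. The spectral radius is the largest eigenvalue of the adjacency matrix of $\Gamma$. *)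

theory Defs
  imports Complex_Main "Jordan_Normal_Form.Char_Poly"
begin

text \<open>A simple graph of order n: vertex set {0..<n}, adjacency relation adj that is
 symmetric and irreflexive (only its values on vertex pairs matter).\<close>

definition simple_graph :: "nat \<Rightarrow> (nat \<Rightarrow> nat \<Rightarrow> bool) \<Rightarrow> bool" where
  "simple_graph n adj \<longleftrightarrow> (\<forall>u<n. \<forall>v<n. adj u v = adj v u) \<and> (\<forall>v<n. \<not> adj v v)"

definition graph_size :: "nat \<Rightarrow> (nat \<Rightarrow> nat \<Rightarrow> bool) \<Rightarrow> nat" where
  "graph_size n adj = card {{u, v} | u v. u < n \<and> v < n \<and> adj u v}"

definition adj_matrix :: "nat \<Rightarrow> (nat \<Rightarrow> nat \<Rightarrow> bool) \<Rightarrow> real mat" where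
  "adj_matrix n adj = mat n n (\<lambda>(i, j). if adj i j then 1 else 0)"

definition graph_spectral_radius :: "nat \<Rightarrow> (nat \<Rightarrow> nat \<Rightarrow> bool) \<Rightarrow> real" where
  "graph_spectral_radius n adj = Max {k. eigenvalue (adj_matrix n adj) k}"

definition nbhd :: "(nat \<Rightarrow> nat \<Rightarrow> bool) \<Rightarrow> nat set \<Rightarrow> nat \<Rightarrow> nat set" where
  "nbhd adj S v = {u \<in> S. adj u v}"

definition global_dual_alliance :: "nat \<Rightarrow> (nat \<Rightarrow> nat \<Rightarrow> bool) \<Rightarrow> nat set \<Rightarrow> bool" where
  "global_dual_alliance n adj S \<longleftrightarrow> S \<noteq> {} \<and> S \<subseteq> {0..<n} \<and>
     (\<forall>v\<in>S. card (nbhd adj S v) + 1 \<ge> card (nbhd adj ({0..<n} - S) v)) \<and>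
     (\<forall>v\<in>{0..<n} - S. card (nbhd adj S v) \<ge> card (nbhd adj ({0..<n} - S) v) + 1)"

definition global_strong_dual_alliance :: "nat \<Rightarrow> (nat \<Rightarrow> nat \<Rightarrow> bool) \<Rightarrow> nat set \<Rightarrow> bool" where
  "global_strong_dual_alliance n adj S \<longleftrightarrow> S \<noteq> {} \<and> S \<subseteq> {0..<n} \<and>
     (\<forall>v\<in>S. card (nbhd adj S v) \<ge> card (nbhd adj ({0..<n} - S) v)) \<and>
     (\<forall>v\<in>{0..<n} - S. card (nbhd adj S v) \<ge> card (nbhd adj ({0..<n} - S) v) + 2)"

definition gdual_alliance_number :: "nat \<Rightarrow> (nat \<Rightarrow> nat \<Rightarrow> bool) \<Rightarrow> nat" where
  "gdual_alliance_number n adj = Min (card ` {S. global_dual_alliance n adj S})"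

definition gstrong_dual_alliance_number :: "nat \<Rightarrow> (nat \<Rightarrow> nat \<Rightarrow> bool) \<Rightarrow> nat" where
  "gstrong_dual_alliance_number n adj = Min (card ` {S. global_strong_dual_alliance n adj S})"

end

theory Submission
  imports Defs "HOL-Analysis.Function_Topology"
begin

definition Qf :: "nat \<Rightarrow> (nat \<Rightarrow> nat \<Rightarrow> real) \<Rightarrow> (nat \<Rightarrow> real) \<Rightarrow> real" where
  "Qf n a x = (\<Sum>i<n. \<Sum>j<n. a i j * x i * x j)"

definition Nf :: "nat \<Rightarrow> (nat \<Rightarrow> real) \<Rightarrow> real" where
  "Nf n x = (\<Sum>i<n. (x i)^2)"

lemma cont_coord: "continuous_on S (\<lambda>x::nat \<Rightarrow> real. x i)"
  by (rule continuous_on_subset[OF continuous_on_product_coordinates]) simp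

lemma Qf_cont: "continuous_on S (Qf n a)"
  unfolding Qf_def
  by (intro continuous_on_sum continuous_on_mult continuous_on_const cont_coord)

lemma Nf_cont: "continuous_on S (Nf n)"
  unfolding Nf_def by (intro continuous_on_sum continuous_on_power cont_coord)

lemma Nf_nonneg: "Nf n x \<ge> 0"
  unfolding Nf_def by (intro sum_nonneg) auto

lemma compact_box: "compact (PiE UNIV (\<lambda>_::nat. {-1..1::real}))"
proof -
  have "compactin (product_topology (\<lambda>_::nat. (euclidean::real topology)) UNIV) (PiE UNIV (\<lambda>_::nat. {-1..1::real}))"
    by (simp add: compactin_PiE)
  then show ?thesis by (simp add: euclidean_product_topology)
qed

lemma compact_sphere: "compact {x::nat\<Rightarrow>real. (\<forall>i. n \<le> i \<longrightarrow> x i = 0) \<and> Nf n x = 1}"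
  (is "compact ?S")
proof -
  have sub: "?S \<subseteq> PiE UNIV (\<lambda>_::nat. {-1..1::real})"
  proof
    fix x assume x: "x \<in> ?S"
    have "\<bar>x i\<bar> \<le> 1" for i
    proof (cases "i < n")
      case True
      have "(x i)^2 \<le> Nf n x" unfolding Nf_def
        by (rule member_le_sum) (use True in auto)
      then show ?thesis using x abs_square_le_1 by auto
    next
      case False then show ?thesis using x by auto
    qed
    then show "x \<in> PiE UNIV (\<lambda>_::nat. {-1..1::real})" by (auto simp: abs_le_iff)
  qed
  have c1: "closed {x::nat\<Rightarrow>real. \<forall>i. n \<le> i \<longrightarrow> x i = 0}"
  proof (rule closed_Collect_all)
    fix i
    show "closed {x::nat\<Rightarrow>real. n \<le> i \<longrightarrow> x i = 0}"
    proof (cases "n \<le> i")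
      case True
      have "closed {x::nat\<Rightarrow>real. x i = (\<lambda>_. 0) x}"
        by (rule closed_Collect_eq) (rule cont_coord, rule continuous_on_const)
      then show ?thesis using True by simp
    qed simp
  qed
  have c2: "closed {x. Nf n x = (\<lambda>_. 1) x}"
    by (rule closed_Collect_eq) (rule Nf_cont, rule continuous_on_const)
  have c3: "closed ({x::nat\<Rightarrow>real. \<forall>i. n \<le> i \<longrightarrow> x i = 0} \<inter> {x. Nf n x = 1})"
    using c1 c2 by (intro closed_Int) auto
  have eq: "?S = PiE UNIV (\<lambda>_::nat. {-1..1::real}) \<inter> ({x. \<forall>i. n \<le> i \<longrightarrow> x i = 0} \<inter> {x. Nf n x = 1})"
    using sub by blast
  show ?thesis unfolding eq by (rule compact_Int_closed[OF compact_box c3])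
qed

lemma Qf_scale: "Qf n a (\<lambda>i. c * x i) = c^2 * Qf n a x"
  unfolding Qf_def by (simp add: sum_distrib_left power2_eq_square algebra_simps)

lemma Nf_scale: "Nf n (\<lambda>i. c * x i) = c^2 * Nf n x"
  unfolding Nf_def by (simp add: sum_distrib_left power2_eq_square algebra_simps)

lemma Qf_cong: "(\<And>i. i < n \<Longrightarrow> x i = y i) \<Longrightarrow> Qf n a x = Qf n a y"
  unfolding Qf_def by (intro sum.cong refl) auto

lemma Nf_cong: "(\<And>i. i < n \<Longrightarrow> x i = y i) \<Longrightarrow> Nf n x = Nf n y"
  unfolding Nf_def by (intro sum.cong refl) auto

lemma Nf_zero: "Nf n x = 0 \<Longrightarrow> i < n \<Longrightarrow> x i = 0"
  unfolding Nf_def by (subst (asm) sum_nonneg_eq_0_iff) auto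

lemma Qf_add: "Qf n a (\<lambda>i. x i + t * w i) = Qf n a x + t * (\<Sum>i<n. \<Sum>j<n. a i j * x i * w j)
   + t * (\<Sum>i<n. \<Sum>j<n. a i j * w i * x j) + t^2 * Qf n a w"
  unfolding Qf_def by (simp add: sum.distrib sum_distrib_left power2_eq_square algebra_simps)

lemma Nf_add: "Nf n (\<lambda>i. x i + t * w i) = Nf n x + 2 * t * (\<Sum>i<n. x i * w i) + t^2 * Nf n w"
  unfolding Nf_def by (simp add: sum.distrib sum_distrib_left power2_eq_square algebra_simps)

lemma rayleigh_max:
  assumes sym: "\<forall>i<n. \<forall>j<n. a i j = a j i" and n: "n \<ge> 1"
  shows "\<exists>M x0. (\<forall>i. n \<le> i \<longrightarrow> x0 i = 0) \<and> Nf n x0 = 1 \<and>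
     (\<forall>i<n. (\<Sum>j<n. a i j * x0 j) = M * x0 i) \<and> (\<forall>y. Qf n a y \<le> M * Nf n y)"
proof -
  define S where "S = {x::nat\<Rightarrow>real. (\<forall>i. n \<le> i \<longrightarrow> x i = 0) \<and> Nf n x = 1}"
  have "(\<lambda>i. if i = 0 then 1 else 0::real) \<in> S"
  proof -
    have "(\<Sum>i<n. (if i = 0 then 1 else 0::real)^2) = (\<Sum>i<n. if i = 0 then 1 else 0)"
      by (intro sum.cong) auto
    also have "\<dots> = 1" using n by (subst sum.delta) auto
    finally show ?thesis using n unfolding S_def Nf_def by simp
  qed
  then have ne: "S \<noteq> {}" by blast
  obtain x0 where x0: "x0 \<in> S" and mx: "\<And>y. y \<in> S \<Longrightarrow> Qf n a y \<le> Qf n a x0"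
    using continuous_attains_sup[OF compact_sphere[of n, folded S_def] ne Qf_cont] by blast
  define M where "M = Qf n a x0"
  have x0z: "\<And>i. n \<le> i \<Longrightarrow> x0 i = 0" and x0N: "Nf n x0 = 1" using x0 unfolding S_def by auto
  have bound: "Qf n a y \<le> M * Nf n y" for y
  proof (cases "Nf n y = 0")
    case True
    then have "Qf n a y = Qf n a (\<lambda>_. 0)" by (intro Qf_cong) (auto dest: Nf_zero)
    also have "\<dots> = 0" unfolding Qf_def by simp
    finally show ?thesis using True by simp
  next
    case False
    then have pos: "Nf n y > 0" using Nf_nonneg[of n y] by linarith
    define s where "s = sqrt (Nf n y)"
    have s: "s > 0" "s^2 = Nf n y" using pos unfolding s_def by auto
    define z where "z = (\<lambda>i. (1/s) * (if i < n then y i else 0))"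
    have "Nf n (\<lambda>i. if i < n then y i else 0) = Nf n y" by (rule Nf_cong) simp
    then have "Nf n z = (1/s)^2 * Nf n y"
      unfolding z_def Nf_scale by simp
    also have "\<dots> = 1" using s pos by (simp add: power_divide)
    finally have "z \<in> S" unfolding S_def z_def by auto
    then have zM: "Qf n a z \<le> M" using mx M_def by blast
    have "Qf n a (\<lambda>i. if i < n then y i else 0) = Qf n a y" by (rule Qf_cong) simp
    then have "Qf n a z = (1/s)^2 * Qf n a y"
      unfolding z_def Qf_scale by simp
    with zM have "Qf n a y / s^2 \<le> M" by (simp add: power_divide)
    then show ?thesis using s pos by (simp add: divide_le_eq mult.commute)
  qed
  define w where "w = (\<lambda>i. (\<Sum>j<n. a i j * x0 j) - M * x0 i)"
  have cross: "(\<Sum>i<n. \<Sum>j<n. a i j * x0 i * w j) = (\<Sum>i<n. \<Sum>j<n. a i j * w i * x0 j)"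
  proof -
    have "(\<Sum>i<n. \<Sum>j<n. a i j * x0 i * w j) = (\<Sum>j<n. \<Sum>i<n. a i j * x0 i * w j)"
      by (rule sum.swap)
    also have "\<dots> = (\<Sum>j<n. \<Sum>i<n. a j i * w j * x0 i)"
      using sym by (intro sum.cong refl) (auto simp: mult.commute mult.left_commute)
    finally show ?thesis .
  qed
  define B where "B = (\<Sum>i<n. \<Sum>j<n. a i j * w i * x0 j)"
  define C where "C = (\<Sum>i<n. x0 i * w i)"
  have BC: "B - M * C = Nf n w"
  proof -
    have "B = (\<Sum>i<n. w i * (\<Sum>j<n. a i j * x0 j))"
      unfolding B_def by (simp add: sum_distrib_left mult.commute mult.left_commute)
    moreover have "M * C = (\<Sum>i<n. w i * (M * x0 i))"
      unfolding C_def by (simp add: sum_distrib_left mult.commute mult.left_commute)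
    ultimately have "B - M * C = (\<Sum>i<n. w i * ((\<Sum>j<n. a i j * x0 j) - M * x0 i))"
      by (simp add: sum_subtractf right_diff_distrib)
    also have "\<dots> = Nf n w" unfolding Nf_def w_def by (simp add: power2_eq_square)
    finally show ?thesis .
  qed
  have ineq: "2 * t * Nf n w + t^2 * (Qf n a w - M * Nf n w) \<le> 0" for t
  proof -
    have "Qf n a (\<lambda>i. x0 i + t * w i) \<le> M * Nf n (\<lambda>i. x0 i + t * w i)" by (rule bound)
    moreover have "Qf n a (\<lambda>i. x0 i + t * w i) = M + 2 * t * B + t^2 * Qf n a w"
      using Qf_add[of n a x0 t w] cross unfolding M_def B_def by simp
    moreover have "Nf n (\<lambda>i. x0 i + t * w i) = 1 + 2 * t * C + t^2 * Nf n w"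
      using Nf_add[of n x0 t w] x0N unfolding C_def by simp
    ultimately have h: "M + 2 * t * B + t^2 * Qf n a w \<le> M * (1 + 2 * t * C + t^2 * Nf n w)"
      by simp
    have e1: "M * (1 + 2 * t * C + t^2 * Nf n w) = M + 2 * t * (M * C) + t^2 * (M * Nf n w)"
      by (simp add: algebra_simps)
    have e2: "2 * t * (B - M * C) + t^2 * (Qf n a w - M * Nf n w)
       = 2 * t * B - 2 * t * (M * C) + t^2 * Qf n a w - t^2 * (M * Nf n w)"
      by (simp add: algebra_simps)
    have "2 * t * (B - M * C) + t^2 * (Qf n a w - M * Nf n w) \<le> 0"
      using h e1 e2 by linarith
    then show ?thesis using BC by simp
  qed
  have Nw0: "Nf n w = 0"
  proof (rule ccontr)
    assume "Nf n w \<noteq> 0"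
    then have Np: "Nf n w > 0" using Nf_nonneg[of n w] by linarith
    define D where "D = Qf n a w - M * Nf n w"
    define t where "t = Nf n w / (\<bar>D\<bar> + 1)"
    have tp: "t > 0" unfolding t_def using Np by simp
    have "2 * t * Nf n w + t^2 * D \<le> 0" using ineq[of t] unfolding D_def .
    moreover have "t^2 * D \<ge> - (t^2 * (\<bar>D\<bar> + 1))"
    proof -
      have "t^2 * (-(\<bar>D\<bar> + 1)) \<le> t^2 * D" by (rule mult_left_mono) auto
      then show ?thesis by (simp add: algebra_simps)
    qed
    moreover have "t^2 * (\<bar>D\<bar> + 1) = t * Nf n w"
      unfolding t_def by (simp add: power2_eq_square)
    ultimately have "t * Nf n w \<le> 0" by linarith
    moreover have "t * Nf n w > 0" using tp Np by simp
    ultimately show False by linarith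
  qed
  have "\<forall>i<n. (\<Sum>j<n. a i j * x0 j) = M * x0 i"
    using Nf_zero[OF Nw0] unfolding w_def by auto
  then show ?thesis using x0z x0N bound by blast
qed

lemma lam_bound:
  assumes g: "simple_graph n adj" and n: "n \<ge> 1"
  shows "Qf n (\<lambda>i j. if adj i j then 1 else 0) x \<le> graph_spectral_radius n adj * Nf n x"
proof -
  define a where "a = (\<lambda>i j. if adj i j then 1 else 0::real)"
  have sym: "\<forall>i<n. \<forall>j<n. a i j = a j i" using g unfolding simple_graph_def a_def by auto
  obtain M x0 where x0z: "\<forall>i. n \<le> i \<longrightarrow> x0 i = 0" and x0N: "Nf n x0 = 1"
    and ev: "\<forall>i<n. (\<Sum>j<n. a i j * x0 j) = M * x0 i" and bd: "\<forall>y. Qf n a y \<le> M * Nf n y"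
    using rayleigh_max[OF sym n] by blast
  define A where "A = adj_matrix n adj"
  have A: "A \<in> carrier_mat n n" unfolding A_def adj_matrix_def by simp
  have "eigenvector A (Matrix.vec n x0) M"
    unfolding eigenvector_def
  proof (intro conjI)
    show "Matrix.vec n x0 \<in> carrier_vec (dim_row A)" using A by simp
    show "Matrix.vec n x0 \<noteq> 0\<^sub>v (dim_row A)"
    proof
      assume "Matrix.vec n x0 = 0\<^sub>v (dim_row A)"
      then have "\<forall>i<n. x0 i = 0" using A
        by (metis carrier_matD(1) index_vec index_zero_vec(1))
      then have "Nf n x0 = 0" unfolding Nf_def by simp
      then show False using x0N by simp
    qed
    show "A *\<^sub>v Matrix.vec n x0 = M \<cdot>\<^sub>v Matrix.vec n x0"
    proof (rule eq_vecI)
      fix i assume "i < dim_vec (M \<cdot>\<^sub>v Matrix.vec n x0)"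
      then have i: "i < n" by simp
      show "(A *\<^sub>v Matrix.vec n x0) $ i = (M \<cdot>\<^sub>v Matrix.vec n x0) $ i"
        using ev i unfolding A_def adj_matrix_def a_def
        by (simp add: mult_mat_vec_def scalar_prod_def atLeast0LessThan)
    qed (use A in simp)
  qed
  then have evM: "eigenvalue A M" unfolding eigenvalue_def by blast
  have "{k. eigenvalue A k} = {k. poly (char_poly A) k = 0}"
    using eigenvalue_root_char_poly[OF A] by blast
  moreover have "char_poly A \<noteq> 0"
    using degree_monic_char_poly[OF A] by auto
  ultimately have fin: "finite {k. eigenvalue A k}" by (simp add: poly_roots_finite)
  have "M \<le> graph_spectral_radius n adj"
    unfolding graph_spectral_radius_def A_def[symmetric] using fin evM by (intro Max_ge) auto
  then have "M * Nf n x \<le> graph_spectral_radius n adj * Nf n x"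
    using Nf_nonneg by (intro mult_right_mono) auto
  then show ?thesis using bd unfolding a_def by (meson order_trans)
qed



lemma handshake:
  assumes g: "simple_graph n adj"
  shows "2 * graph_size n adj = (\<Sum>v\<in>{0..<n}. card (nbhd adj {0..<n} v))"
proof -
  define V where "V = {0..<n::nat}"
  define E where "E = {{u, v} | u v. u < n \<and> v < n \<and> adj u v}"
  define P where "P = Sigma V (\<lambda>v. nbhd adj V v)"
  define f where "f = (\<lambda>(v::nat, u::nat). {v, u})"
  have finP: "finite P" unfolding P_def V_def nbhd_def by auto
  have cP: "card P = (\<Sum>v\<in>V. card (nbhd adj V v))"
    unfolding P_def V_def nbhd_def by (subst card_SigmaI) auto
  have fP: "f ` P = E"
  proof
    show "f ` P \<subseteq> E"
    proof
      fix e assume "e \<in> f ` P"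
      then obtain v u where p: "(v, u) \<in> P" "e = f (v, u)" by auto
      then have "u < n" "v < n" "adj u v" unfolding P_def V_def nbhd_def by auto
      moreover have "e = {u, v}" using p unfolding f_def by (simp add: insert_commute)
      ultimately show "e \<in> E" unfolding E_def by blast
    qed
    show "E \<subseteq> f ` P"
    proof
      fix e assume "e \<in> E"
      then obtain u v where e: "e = {u, v}" "u < n" "v < n" "adj u v" unfolding E_def by blast
      then have "(v, u) \<in> P" unfolding P_def V_def nbhd_def by auto
      moreover have "f (v, u) = e" unfolding f_def e by (simp add: insert_commute)
      ultimately show "e \<in> f ` P" by (metis image_eqI)
    qed
  qed
  have finE: "finite E" using fP finP by auto
  have PU: "P = (\<Union>e\<in>E. {p\<in>P. f p = e})" using fP by auto
  have "card P = (\<Sum>e\<in>E. card {p\<in>P. f p = e})"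
    by (subst PU, rule card_UN_disjoint) (use finE finP in auto)
  also have "\<dots> = (\<Sum>e\<in>E. 2)"
  proof (rule sum.cong[OF refl])
    fix e assume "e \<in> E"
    then obtain u v where e: "e = {u, v}" "u < n" "v < n" "adj u v" unfolding E_def by blast
    have uv: "u \<noteq> v" using g e unfolding simple_graph_def by auto
    have vu: "adj v u" using g e unfolding simple_graph_def by auto
    have "{p\<in>P. f p = e} = {(u, v), (v, u)}"
    proof
      show "{p\<in>P. f p = e} \<subseteq> {(u, v), (v, u)}"
      proof
        fix p assume "p \<in> {p\<in>P. f p = e}"
        then have "f p = {u, v}" using e by simp
        moreover obtain a b where ab: "p = (a, b)" by (cases p)
        ultimately have "p = (a, b)" "{a, b} = {u, v}" unfolding f_def by auto
        then show "p \<in> {(u, v), (v, u)}" unfolding doubleton_eq_iff by auto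
      qed
      show "{(u, v), (v, u)} \<subseteq> {p\<in>P. f p = e}"
        using e vu unfolding P_def V_def nbhd_def f_def by (auto simp: insert_commute)
    qed
    then show "card {p\<in>P. f p = e} = 2" using uv by simp
  qed
  finally have "card P = 2 * card E" by simp
  then show ?thesis using cP unfolding graph_size_def E_def[symmetric] V_def by simp
qed

definition dd :: "(nat \<Rightarrow> nat \<Rightarrow> bool) \<Rightarrow> nat set \<Rightarrow> nat set \<Rightarrow> real" where
  "dd adj X Y = (\<Sum>v\<in>X. real (card (nbhd adj Y v)))"

lemma card_nbhd_real: "finite Y \<Longrightarrow> real (card (nbhd adj Y v)) = (\<Sum>u\<in>Y. if adj u v then 1 else 0)"
  unfolding nbhd_def by (simp add: sum.inter_filter[symmetric])

lemma dd_sum: "finite Y \<Longrightarrow> dd adj X Y = (\<Sum>v\<in>X. \<Sum>u\<in>Y. if adj u v then 1 else 0)"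
  unfolding dd_def by (simp add: card_nbhd_real)

lemma dd_swap:
  assumes g: "simple_graph n adj" and X: "X \<subseteq> {0..<n}" and Y: "Y \<subseteq> {0..<n}"
  shows "dd adj X Y = dd adj Y X"
proof -
  have fX: "finite X" and fY: "finite Y" using X Y finite_subset by auto
  have "dd adj X Y = (\<Sum>v\<in>X. \<Sum>u\<in>Y. if adj u v then 1 else 0)" using fY by (rule dd_sum)
  also have "\<dots> = (\<Sum>u\<in>Y. \<Sum>v\<in>X. if adj u v then 1 else 0)" by (rule sum.swap)
  also have "\<dots> = (\<Sum>u\<in>Y. \<Sum>v\<in>X. if adj v u then 1 else 0)"
  proof (intro sum.cong refl)
    fix u v assume "u \<in> Y" "v \<in> X"
    then have "u < n" "v < n" using X Y by auto
    then have "adj u v = adj v u" using g unfolding simple_graph_def by blast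
    then show "(if adj u v then 1 else 0::real) = (if adj v u then 1 else 0)" by simp
  qed
  also have "\<dots> = dd adj Y X" using fX by (simp add: dd_sum)
  finally show ?thesis .
qed

lemma dd_split_right:
  assumes "finite Y1" "finite Y2" "Y1 \<inter> Y2 = {}"
  shows "dd adj X (Y1 \<union> Y2) = dd adj X Y1 + dd adj X Y2"
  using assms by (simp add: dd_sum sum.union_disjoint sum.distrib)

lemma dd_split_left:
  assumes "finite X1" "finite X2" "X1 \<inter> X2 = {}"
  shows "dd adj (X1 \<union> X2) Y = dd adj X1 Y + dd adj X2 Y"
  using assms unfolding dd_def by (simp add: sum.union_disjoint)

lemma dSS:
  assumes g: "simple_graph n adj" and n: "n \<ge> 1" and S: "S \<subseteq> {0..<n}"
  shows "dd adj S S \<le> graph_spectral_radius n adj * real (card S)"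
proof -
  define a where "a = (\<lambda>i j. if adj i j then 1 else 0::real)"
  define x where "x = (\<lambda>i. if i \<in> S then 1 else 0::real)"
  have fS: "finite S" using S finite_subset by auto
  have SI: "{..<n} \<inter> S = S" using S by auto
  have "Qf n a x = (\<Sum>i<n. if i \<in> S then (\<Sum>j<n. if j \<in> S then a i j else 0) else 0)"
    unfolding Qf_def x_def by (auto intro!: sum.cong)
  also have "\<dots> = (\<Sum>i\<in>S. \<Sum>j\<in>S. a i j)"
    by (simp add: sum.inter_restrict[symmetric] SI)
  also have "\<dots> = (\<Sum>j\<in>S. \<Sum>i\<in>S. a i j)" by (rule sum.swap)
  also have "\<dots> = dd adj S S" using fS unfolding a_def by (simp add: dd_sum)
  finally have Q: "Qf n a x = dd adj S S" .
  have "Nf n x = (\<Sum>i<n. if i \<in> S then 1 else 0)"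
    unfolding Nf_def x_def by (intro sum.cong refl) auto
  also have "\<dots> = real (card S)" by (simp add: sum.inter_restrict[symmetric] SI)
  finally have N: "Nf n x = real (card S)" .
  show ?thesis using lam_bound[OF g n, of x] Q N unfolding a_def by simp
qed

lemma decomp:
  assumes g: "simple_graph n adj" and S: "S \<subseteq> {0..<n}"
  defines "T \<equiv> {0..<n} - S"
  shows "2 * real (graph_size n adj) = dd adj S S + 2 * dd adj S T + dd adj T T"
    and "real (card T) = real n - real (card S)"
proof -
  have fS: "finite S" and fT: "finite T" using S finite_subset unfolding T_def by auto
  have V: "{0..<n} = S \<union> T" and disj: "S \<inter> T = {}" using S unfolding T_def by auto
  have "2 * real (graph_size n adj) = real (2 * graph_size n adj)" by simp
  also have "\<dots> = dd adj {0..<n} {0..<n}" unfolding handshake[OF g] dd_def by simp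
  also have "\<dots> = dd adj S S + dd adj S T + (dd adj T S + dd adj T T)"
    unfolding V using fS fT disj
    by (simp add: dd_split_left dd_split_right Int_commute)
  also have "dd adj T S = dd adj S T"
    by (rule dd_swap[OF g]) (use S in \<open>auto simp: T_def\<close>)
  finally show "2 * real (graph_size n adj) = dd adj S S + 2 * dd adj S T + dd adj T T" by simp
  have "card T = n - card S" unfolding T_def using S fS by (simp add: card_Diff_subset)
  moreover have "card S \<le> n" using S card_mono[of "{0..<n}" S] by auto
  ultimately show "real (card T) = real n - real (card S)" by simp
qed

lemma dual_bound:
  assumes g: "simple_graph n adj" and n: "n \<ge> 1" and A: "global_dual_alliance n adj S"
  shows "\<lceil>(2 * real (graph_size n adj) + real n) / (4 * (graph_spectral_radius n adj + 1))\<rceil> \<le> int (card S)"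
proof -
  define T where "T = {0..<n} - S"
  define lam where "lam = graph_spectral_radius n adj"
  have S: "S \<subseteq> {0..<n}" and Sne: "S \<noteq> {}"
    and aS: "\<forall>v\<in>S. card (nbhd adj T v) \<le> card (nbhd adj S v) + 1"
    and aT: "\<forall>v\<in>T. card (nbhd adj S v) \<ge> card (nbhd adj T v) + 1"
    using A unfolding global_dual_alliance_def T_def by auto
  have fS: "finite S" using S finite_subset by auto
  have cS: "card S \<ge> 1" using fS Sne by (simp add: Suc_le_eq card_gt_0_iff)
  note dc = decomp[OF g S, folded T_def]
  have F1: "dd adj S S \<le> lam * real (card S)" using dSS[OF g n S] unfolding lam_def .
  have "dd adj S T \<le> (\<Sum>v\<in>S. real (card (nbhd adj S v)) + 1)"
    unfolding dd_def using aS by (intro sum_mono) (metis of_nat_1 of_nat_add of_nat_le_iff)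
  then have F2: "dd adj S T \<le> dd adj S S + real (card S)"
    unfolding dd_def by (simp add: sum.distrib)
  have "(\<Sum>v\<in>T. real (card (nbhd adj T v)) + 1) \<le> dd adj T S"
    unfolding dd_def using aT by (intro sum_mono) (metis of_nat_1 of_nat_add of_nat_le_iff)
  then have F3: "dd adj T T + real (card T) \<le> dd adj T S"
    unfolding dd_def by (simp add: sum.distrib)
  have F4: "dd adj T S = dd adj S T"
    by (rule dd_swap[OF g]) (use S in \<open>auto simp: T_def\<close>)
  have nn: "dd adj S S \<ge> 0" unfolding dd_def by (intro sum_nonneg) auto
  have "lam * real (card S) \<ge> 0" using F1 nn by linarith
  then have lam0: "lam \<ge> 0" using cS by (simp add: zero_le_mult_iff)
  have key: "2 * real (graph_size n adj) + real n \<le> 4 * (lam + 1) * real (card S)"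
    using dc F1 F2 F3 F4 by (simp add: algebra_simps)
  have "(2 * real (graph_size n adj) + real n) / (4 * (lam + 1)) \<le> real (card S)"
    using key lam0 by (simp add: divide_le_eq mult.commute)
  then show ?thesis unfolding lam_def[symmetric] by (simp add: ceiling_le_iff)
qed

lemma strong_bound:
  assumes g: "simple_graph n adj" and n: "n \<ge> 1" and A: "global_strong_dual_alliance n adj S"
  shows "\<lceil>(real (graph_size n adj) + real n) / (2 * graph_spectral_radius n adj + 1)\<rceil> \<le> int (card S)"
proof -
  define T where "T = {0..<n} - S"
  define lam where "lam = graph_spectral_radius n adj"
  have S: "S \<subseteq> {0..<n}" and Sne: "S \<noteq> {}"
    and aS: "\<forall>v\<in>S. card (nbhd adj T v) \<le> card (nbhd adj S v)"
    and aT: "\<forall>v\<in>T. card (nbhd adj S v) \<ge> card (nbhd adj T v) + 2"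
    using A unfolding global_strong_dual_alliance_def T_def by auto
  have fS: "finite S" using S finite_subset by auto
  have cS: "card S \<ge> 1" using fS Sne by (simp add: Suc_le_eq card_gt_0_iff)
  note dc = decomp[OF g S, folded T_def]
  have F1: "dd adj S S \<le> lam * real (card S)" using dSS[OF g n S] unfolding lam_def .
  have F2: "dd adj S T \<le> dd adj S S"
    unfolding dd_def using aS by (intro sum_mono) simp
  have "(\<Sum>v\<in>T. real (card (nbhd adj T v)) + 2) \<le> dd adj T S"
    unfolding dd_def using aT by (intro sum_mono) (metis of_nat_numeral of_nat_add of_nat_le_iff)
  then have F3: "dd adj T T + 2 * real (card T) \<le> dd adj T S"
    unfolding dd_def by (simp add: sum.distrib)
  have F4: "dd adj T S = dd adj S T"
    by (rule dd_swap[OF g]) (use S in \<open>auto simp: T_def\<close>)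
  have nn: "dd adj S S \<ge> 0" unfolding dd_def by (intro sum_nonneg) auto
  have "lam * real (card S) \<ge> 0" using F1 nn by linarith
  then have lam0: "lam \<ge> 0" using cS by (simp add: zero_le_mult_iff)
  have key: "real (graph_size n adj) + real n \<le> (2 * lam + 1) * real (card S)"
    using dc F1 F2 F3 F4 by (simp add: algebra_simps)
  have "(real (graph_size n adj) + real n) / (2 * lam + 1) \<le> real (card S)"
    using key lam0 by (simp add: divide_le_eq mult.commute)
  then show ?thesis unfolding lam_def[symmetric] by (simp add: ceiling_le_iff)
qed

lemma min_attained:
  assumes "\<And>S. P S \<Longrightarrow> S \<subseteq> {0..<n::nat}" and "P {0..<n}"
  shows "\<exists>S. P S \<and> Min (card ` {S. P S}) = card S"
proof -
  have "{S. P S} \<subseteq> Pow {0..<n}" using assms(1) by auto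
  then have "finite {S. P S}" by (rule finite_subset) simp
  then have "Min (card ` {S. P S}) \<in> card ` {S. P S}"
    using assms(2) by (intro Min_in) auto
  then show ?thesis by auto
qed

theorem theorem8:
  fixes n :: nat and adj :: "nat \<Rightarrow> nat \<Rightarrow> bool"
  assumes "simple_graph n adj" and "n \<ge> 1"
  defines "m \<equiv> graph_size n adj" and "lam \<equiv> graph_spectral_radius n adj"
  shows "int (gdual_alliance_number n adj) \<ge> \<lceil>(2 * real m + real n) / (4 * (lam + 1))\<rceil>
     \<and> int (gstrong_dual_alliance_number n adj) \<ge> \<lceil>(real m + real n) / (2 * lam + 1)\<rceil>"
proof
  have ne: "{0..<n} \<noteq> {}" using assms(2) by auto
  obtain S where S: "global_dual_alliance n adj S"
    and cS: "gdual_alliance_number n adj = card S"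
    using min_attained[of "global_dual_alliance n adj" n] ne
    unfolding gdual_alliance_number_def global_dual_alliance_def nbhd_def by auto
  show "int (gdual_alliance_number n adj) \<ge> \<lceil>(2 * real m + real n) / (4 * (lam + 1))\<rceil>"
    unfolding cS m_def lam_def using dual_bound[OF assms(1,2) S] .
  obtain S' where S': "global_strong_dual_alliance n adj S'"
    and cS': "gstrong_dual_alliance_number n adj = card S'"
    using min_attained[of "global_strong_dual_alliance n adj" n] ne
    unfolding gstrong_dual_alliance_number_def global_strong_dual_alliance_def nbhd_def by auto
  show "int (gstrong_dual_alliance_number n adj) \<ge> \<lceil>(real m + real n) / (2 * lam + 1)\<rceil>"
    unfolding cS' m_def lam_def using strong_bound[OF assms(1,2) S'] .
qed

end
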